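(* Let $L$ be one of the logics $\mathbf{IL}^-(\mathbf{J4}_{+})$, $\mathbf{IL}^-(\mathbf{J1},\mathbf{J4}_{+})$, $\mathbf{IL}^-(\mathbf{J4}_{+},\mathbf{J5})$, $\mathbf{IL}^-(\mathbf{J1},\mathbf{J4}_{+},\mathbf{J5})$. For any modal formula $A$ the following are equivalent: (i) $L\vdash A$; (ii) $A$ is valid in all simplified $L$-frames; (iii) $A$ is valid in all finite simplified $L$-frames.
   Context: Modal formulas are built from propositional variables, $\top$, $\bot$ using $\to,\lor,\land$, unary $\Box$ and binary $\rhd$; $\lnot A:=A\to\bot$, $\Diamond A:=\lnot\Box\lnot A$. The logic $\mathbf{IL}^-$ has as axioms all tautologies, $\Box(A\to B)\to(\Box A\to\Box B)$, $\Box(\Box A\to A)\to\Box A$, $\mathbf{J3}$: $(A\rhd C)\land(B\rhd C)\to(A\lor B)\rhd C$, and $\mathbf{J6}$: $\Box\lnot A\leftrightarrow A\rhd\bot$; its rules are modus ponens, necessitation ($A/\Box A$), $\mathbf{R1}$: from $A\to B$ infer $C\rhd A\to C\rhd B$, and $\mathbf{R2}$: from $A\to B$ infer $B\rhd C\to A\rhd C$. $\mathbf{IL}^-(\Sigma_1,\dots,\Sigma_n)$ denotes $\mathbf{IL}^-$ with the axiom schemes $\Sigma_i$ added, where $\mathbf{J1}$: $\Box(A\to B)\to A\rhd B$; $\mathbf{J4}_{+}$: $\Box(A\to B)\to(C\rhd A\to C\rhd B)$; $\mathbf{J5}$: $\Diamond A\rhd A$. A simplified $\mathbf{IL}^-(\mathbf{J4}_{+})$-frame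 is $(W,R,S)$ with $W$ non-empty, $R$ a transitive, conversely well-founded binary relation on $W$, $S$ any binary relation on $W$; it is finite if $W$ is finite. Forcing: arbitrary on variables, Boolean clauses as usual, $x\Vdash\Box A$ iff $y\Vdash A$ for all $y$ with $xRy$, and $x\Vdash A\rhd B$ iff for every $y$ with $xRy$ and $y\Vdash A$ there is $z$ with $xRz$, $ySz$, $z\Vdash B$. $A$ is valid in a frame if it is forced at every point under every forcing relation. A simplified $L$-frame is a simplified $\mathbf{IL}^-(\mathbf{J4}_{+})$-frame such that: if $\mathbf{J1}$ is an axiom of $L$ then $S$ is reflexive; if $\mathbf{J5}$ is an axiom of $L$ then $R\subseteq S$. *)

theory Defs
  imports Main "HOL-Library.Infinite_Typeclass"
begin

datatype fm =
    Var nat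
  | Top
  | Bot
  | Imp fm fm
  | Or fm fm
  | And fm fm
  | Box fm
  | Rhd fm fm

definition Neg :: "fm \<Rightarrow> fm" where "Neg A = Imp A Bot"
definition Dia :: "fm \<Rightarrow> fm" where "Dia A = Neg (Box (Neg A))"
definition Iff :: "fm \<Rightarrow> fm \<Rightarrow> fm" where "Iff A B = And (Imp A B) (Imp B A)"

fun peval :: "(fm \<Rightarrow> bool) \<Rightarrow> fm \<Rightarrow> bool" where
  "peval g (Var n) = g (Var n)"
| "peval g Top = True"
| "peval g Bot = False"
| "peval g (Imp A B) = (peval g A \<longrightarrow> peval g B)"
| "peval g (Or A B) = (peval g A \<or> peval g B)"
| "peval g (And A B) = (peval g A \<and> peval g B)"
| "peval g (Box A) = g (Box A)"
| "peval g (Rhd A B) = g (Rhd A B)"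

definition taut :: "fm \<Rightarrow> bool" where "taut A = (\<forall>g. peval g A)"

text \<open>prov j1 j5 A: A is provable in IL^-(J4+) extended by J1 if j1 and by J5 if j5.
 The four combinations of j1, j5 give exactly the four logics of the theorem.\<close>
inductive prov :: "bool \<Rightarrow> bool \<Rightarrow> fm \<Rightarrow> bool" for j1 j5 where
  ax_taut: "taut A \<Longrightarrow> prov j1 j5 A"
| ax_K: "prov j1 j5 (Imp (Box (Imp A B)) (Imp (Box A) (Box B)))"
| ax_L: "prov j1 j5 (Imp (Box (Imp (Box A) A)) (Box A))"
| ax_J3: "prov j1 j5 (Imp (And (Rhd A C) (Rhd B C)) (Rhd (Or A B) C))"
| ax_J6: "prov j1 j5 (Iff (Box (Neg A)) (Rhd A Bot))"
| ax_J4p: "prov j1 j5 (Imp (Box (Imp A B)) (Imp (Rhd C A) (Rhd C B)))"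
| ax_J1: "j1 \<Longrightarrow> prov j1 j5 (Imp (Box (Imp A B)) (Rhd A B))"
| ax_J5: "j5 \<Longrightarrow> prov j1 j5 (Rhd (Dia A) A)"
| mp: "prov j1 j5 (Imp A B) \<Longrightarrow> prov j1 j5 A \<Longrightarrow> prov j1 j5 B"
| nec: "prov j1 j5 A \<Longrightarrow> prov j1 j5 (Box A)"
| R1: "prov j1 j5 (Imp A B) \<Longrightarrow> prov j1 j5 (Imp (Rhd C A) (Rhd C B))"
| R2: "prov j1 j5 (Imp A B) \<Longrightarrow> prov j1 j5 (Imp (Rhd B C) (Rhd A C))"

definition simp_frame :: "'w set \<Rightarrow> ('w \<Rightarrow> 'w \<Rightarrow> bool) \<Rightarrow> ('w \<Rightarrow> 'w \<Rightarrow> bool) \<Rightarrow> bool" where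
  "simp_frame W R S \<longleftrightarrow>
     W \<noteq> {}
   \<and> (\<forall>x y. R x y \<longrightarrow> x \<in> W \<and> y \<in> W)
   \<and> (\<forall>x y. S x y \<longrightarrow> x \<in> W \<and> y \<in> W)
   \<and> transp R
   \<and> wfP (\<lambda>x y. R y x)"

definition L_frame :: "bool \<Rightarrow> bool \<Rightarrow> 'w set \<Rightarrow> ('w \<Rightarrow> 'w \<Rightarrow> bool) \<Rightarrow> ('w \<Rightarrow> 'w \<Rightarrow> bool) \<Rightarrow> bool" where
  "L_frame j1 j5 W R S \<longleftrightarrow>
     simp_frame W R S
   \<and> (j1 \<longrightarrow> (\<forall>x\<in>W. S x x))
   \<and> (j5 \<longrightarrow> (\<forall>x y. R x y \<longrightarrow> S x y))"

fun forces :: "('w \<Rightarrow> 'w \<Rightarrow> bool) \<Rightarrow> ('w \<Rightarrow> 'w \<Rightarrow> bool) \<Rightarrow> ('w \<Rightarrow> nat \<Rightarrow> bool) \<Rightarrow> 'w \<Rightarrow> fm \<Rightarrow> bool" where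
  "forces R S V x (Var n) = V x n"
| "forces R S V x Top = True"
| "forces R S V x Bot = False"
| "forces R S V x (Imp A B) = (forces R S V x A \<longrightarrow> forces R S V x B)"
| "forces R S V x (Or A B) = (forces R S V x A \<or> forces R S V x B)"
| "forces R S V x (And A B) = (forces R S V x A \<and> forces R S V x B)"
| "forces R S V x (Box A) = (\<forall>y. R x y \<longrightarrow> forces R S V y A)"
| "forces R S V x (Rhd A B) =
     (\<forall>y. R x y \<and> forces R S V y A \<longrightarrow> (\<exists>z. R x z \<and> S y z \<and> forces R S V z B))"

definition valid_in :: "'w set \<Rightarrow> ('w \<Rightarrow> 'w \<Rightarrow> bool) \<Rightarrow> ('w \<Rightarrow> 'w \<Rightarrow> bool) \<Rightarrow> fm \<Rightarrow> bool" where
  "valid_in W R S A \<longleftrightarrow> (\<forall>V. \<forall>x\<in>W. forces R S V x A)"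

end

theory Submission
  imports Defs
begin


fun conjl :: "fm list \<Rightarrow> fm" where
  "conjl [] = Top" | "conjl (a # l) = And a (conjl l)"
fun disjl :: "fm list \<Rightarrow> fm" where
  "disjl [] = Bot" | "disjl (a # l) = Or a (disjl l)"

lemma peval_conjl[simp]: "peval g (conjl L) = (\<forall>x\<in>set L. peval g x)" by (induct L) auto
lemma peval_disjl[simp]: "peval g (disjl L) = (\<exists>x\<in>set L. peval g x)" by (induct L) auto
lemma peval_Neg[simp]: "peval g (Neg A) = (\<not> peval g A)" by (simp add: Neg_def)
lemma peval_Iff[simp]: "peval g (Iff A B) = (peval g A = peval g B)" by (auto simp: Iff_def)

context fixes j1 j5 :: bool begin

abbreviation pv where "pv \<equiv> prov j1 j5"

lemma taut_mp: "taut (Imp A B) \<Longrightarrow> pv A \<Longrightarrow> pv B"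
  using ax_taut mp by blast
lemma taut_mp2: "taut (Imp A (Imp B C)) \<Longrightarrow> pv A \<Longrightarrow> pv B \<Longrightarrow> pv C"
  using ax_taut mp by blast
lemma taut_mp3: "taut (Imp A (Imp B (Imp C D))) \<Longrightarrow> pv A \<Longrightarrow> pv B \<Longrightarrow> pv C \<Longrightarrow> pv D"
  using ax_taut mp by blast
lemma taut_mp4: "taut (Imp A (Imp B (Imp C (Imp D E)))) \<Longrightarrow> pv A \<Longrightarrow> pv B \<Longrightarrow> pv C \<Longrightarrow> pv D \<Longrightarrow> pv E"
  by (meson ax_taut mp)
lemma taut_pv: "taut A \<Longrightarrow> pv A" by (rule ax_taut)

lemma imp_trans: "pv (Imp a b) \<Longrightarrow> pv (Imp b c) \<Longrightarrow> pv (Imp a c)"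
  by (rule taut_mp2[of "Imp a b" "Imp b c"]) (auto simp: taut_def)

lemma box_mono: "pv (Imp X Y) \<Longrightarrow> pv (Imp (Box X) (Box Y))"
  using ax_K mp nec by blast

lemma imp_conjl: "(\<And>x. x \<in> set L \<Longrightarrow> pv (Imp a x)) \<Longrightarrow> pv (Imp a (conjl L))"
proof (induct L)
  case Nil then show ?case by (intro taut_pv) (simp add: taut_def)
next
  case (Cons b L)
  have "pv (Imp a b)" "pv (Imp a (conjl L))" using Cons by auto
  then show ?case by (rule taut_mp2[rotated]) (auto simp: taut_def)
qed

lemma box_conjl: "pv (Imp (conjl L) X) \<Longrightarrow> pv (Imp (conjl (map Box L)) (Box X))"
proof (induct L arbitrary: X)
  case Nil
  then have "pv X" by (rule taut_mp[rotated]) (simp add: taut_def)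
  then have "pv (Box X)" by (rule nec)
  then show ?case by (rule taut_mp[rotated]) (simp add: taut_def)
next
  case (Cons a L)
  have "pv (Imp (conjl L) (Imp a X))" using Cons(2) by (rule taut_mp[rotated]) (auto simp: taut_def)
  then have h: "pv (Imp (conjl (map Box L)) (Box (Imp a X)))" using Cons(1) by blast
  have k: "pv (Imp (Box (Imp a X)) (Imp (Box a) (Box X)))" by (rule ax_K)
  show ?case using h k by (rule taut_mp2[rotated 1]) (auto simp: taut_def)
qed

lemma four: "pv (Imp (Box X) (Box (Box X)))"
proof -
  let ?Y = "And (Box X) X"
  have a: "pv (Imp (Box ?Y) (Box X))" by (rule box_mono, rule taut_pv) (simp add: taut_def)
  have b: "pv (Imp X (Imp (Box ?Y) ?Y))" using a by (rule taut_mp[rotated]) (auto simp: taut_def)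
  have c: "pv (Imp (Box X) (Box (Imp (Box ?Y) ?Y)))" using b by (rule box_mono)
  have d: "pv (Imp (Box (Imp (Box ?Y) ?Y)) (Box ?Y))" by (rule ax_L)
  have e: "pv (Imp (Box ?Y) (Box (Box X)))" by (rule box_mono, rule taut_pv) (simp add: taut_def)
  show ?thesis using imp_trans[OF imp_trans[OF c d] e] .
qed

lemma rhd_box_left: "pv (Imp (Box (Imp X Y)) (Imp (Rhd Y Z) (Rhd X Z)))"
proof -
  let ?P = "And X Y" and ?N = "And X (Neg Y)"
  have a: "pv (Imp (Rhd Y Z) (Rhd ?P Z))" by (rule R2, rule taut_pv) (simp add: taut_def)
  have b: "pv (Imp (Box (Imp X Y)) (Box (Neg ?N)))" by (rule box_mono, rule taut_pv) (simp add: taut_def)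
  have c: "pv (Iff (Box (Neg ?N)) (Rhd ?N Bot))" by (rule ax_J6)
  have d: "pv (Imp (Rhd ?N Bot) (Rhd ?N Z))" by (rule R1, rule taut_pv) (simp add: taut_def)
  have e: "pv (Imp (And (Rhd ?P Z) (Rhd ?N Z)) (Rhd (Or ?P ?N) Z))" by (rule ax_J3)
  have f: "pv (Imp (Rhd (Or ?P ?N) Z) (Rhd X Z))" by (rule R2, rule taut_pv) (auto simp: taut_def)
  have g: "pv (Imp (Box (Imp X Y)) (Rhd ?N Z))"
    using b c d by (rule taut_mp3[rotated 1]) (auto simp: taut_def)
  show ?thesis using a g e f
    by (rule taut_mp4[rotated 1]) (auto simp: taut_def)
qed

lemma rhd_bot_any: "pv (Rhd Bot Z)"
proof -
  have "pv (Box (Neg Bot))" by (rule nec, rule taut_pv) (simp add: taut_def)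
  moreover have "pv (Iff (Box (Neg Bot)) (Rhd Bot Bot))" by (rule ax_J6)
  moreover have "pv (Imp (Rhd Bot Bot) (Rhd Bot Z))" by (rule R1, rule taut_pv) (simp add: taut_def)
  ultimately show ?thesis by (rule taut_mp3[rotated 1]) (auto simp: taut_def)
qed

end


fun subl :: "fm \<Rightarrow> fm list" where
  "subl (Var n) = [Var n]"
| "subl Top = [Top]"
| "subl Bot = [Bot]"
| "subl (Imp a b) = Imp a b # subl a @ subl b"
| "subl (Or a b) = Or a b # subl a @ subl b"
| "subl (And a b) = And a b # subl a @ subl b"
| "subl (Box a) = Box a # subl a"
| "subl (Rhd a b) = Rhd a b # subl a @ subl b"

definition sub :: "fm \<Rightarrow> fm set" where "sub x = set (subl x)"

lemma sub_refl[simp]: "x \<in> sub x" by (cases x) (auto simp: sub_def)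

lemma sub_simps[simp]:
  "sub (Imp a b) = insert (Imp a b) (sub a \<union> sub b)"
  "sub (Or a b) = insert (Or a b) (sub a \<union> sub b)"
  "sub (And a b) = insert (And a b) (sub a \<union> sub b)"
  "sub (Box a) = insert (Box a) (sub a)"
  "sub (Rhd a b) = insert (Rhd a b) (sub a \<union> sub b)"
  "sub Top = {Top}" "sub Bot = {Bot}" "sub (Var n) = {Var n}"
  by (auto simp: sub_def)

lemma sub_trans: "y \<in> sub x \<Longrightarrow> sub y \<subseteq> sub x"
  by (induct x) auto

lemma sub_conjl: "x \<in> set L \<Longrightarrow> sub x \<subseteq> sub (conjl L)"
  by (induct L) auto

definition ent :: "bool \<Rightarrow> bool \<Rightarrow> fm set \<Rightarrow> fm \<Rightarrow> bool" where
  "ent j1 j5 S \<phi> \<longleftrightarrow> (\<exists>L. set L \<subseteq> S \<and> prov j1 j5 (Imp (conjl L) \<phi>))"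

context fixes j1 j5 :: bool begin

lemma ent_prov: "pv j1 j5 \<phi> \<Longrightarrow> ent j1 j5 S \<phi>"
  unfolding ent_def
  by (rule exI[of _ "[]"]) (auto intro: taut_mp[rotated] simp: taut_def)

lemma ent_mem: "\<phi> \<in> S \<Longrightarrow> ent j1 j5 S \<phi>"
  unfolding ent_def
  by (rule exI[of _ "[\<phi>]"]) (auto intro: taut_pv simp: taut_def)

lemma ent_mono: "ent j1 j5 S \<phi> \<Longrightarrow> S \<subseteq> T \<Longrightarrow> ent j1 j5 T \<phi>"
  unfolding ent_def by blast

lemma ent_mp: "ent j1 j5 S (Imp a b) \<Longrightarrow> ent j1 j5 S a \<Longrightarrow> ent j1 j5 S b"
proof -
  assume "ent j1 j5 S (Imp a b)" "ent j1 j5 S a"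
  then obtain L1 L2 where l: "set L1 \<subseteq> S" "pv j1 j5 (Imp (conjl L1) (Imp a b))"
    "set L2 \<subseteq> S" "pv j1 j5 (Imp (conjl L2) a)" unfolding ent_def by blast
  have "pv j1 j5 (Imp (conjl (L1 @ L2)) b)"
    using l(2) l(4) by (rule taut_mp2[rotated 1]) (auto simp: taut_def)
  then show ?thesis unfolding ent_def using l by (intro exI[of _ "L1 @ L2"]) auto
qed

lemma ent_imp: "ent j1 j5 S a \<Longrightarrow> pv j1 j5 (Imp a b) \<Longrightarrow> ent j1 j5 S b"
  using ent_mp ent_prov by blast

lemma ent_conjl: "(\<And>x. x \<in> set Fs \<Longrightarrow> ent j1 j5 S x) \<Longrightarrow> ent j1 j5 S (conjl Fs)"
proof (induct Fs)
  case Nil then show ?case by (intro ent_prov taut_pv) (simp add: taut_def)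
next
  case (Cons a Fs)
  have "ent j1 j5 S a" "ent j1 j5 S (conjl Fs)" using Cons by auto
  moreover have "pv j1 j5 (Imp a (Imp (conjl Fs) (conjl (a # Fs))))"
    by (intro taut_pv) (simp add: taut_def)
  ultimately show ?case by (meson ent_mp ent_prov)
qed

lemma ent_taut: "(\<And>x. x \<in> set Fs \<Longrightarrow> ent j1 j5 S x) \<Longrightarrow> pv j1 j5 (Imp (conjl Fs) \<psi>) \<Longrightarrow> ent j1 j5 S \<psi>"
  using ent_conjl ent_imp by blast

lemma ent_taut2: "ent j1 j5 S a \<Longrightarrow> ent j1 j5 S b \<Longrightarrow> taut (Imp a (Imp b c)) \<Longrightarrow> ent j1 j5 S c"
  by (meson ent_mp ent_prov taut_pv)

lemma ent_taut1: "ent j1 j5 S a \<Longrightarrow> taut (Imp a c) \<Longrightarrow> ent j1 j5 S c"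
  by (meson ent_mp ent_prov taut_pv)

lemma ent_deduct: "ent j1 j5 (insert x T) \<phi> \<Longrightarrow> ent j1 j5 T (Imp x \<phi>)"
proof -
  assume "ent j1 j5 (insert x T) \<phi>"
  then obtain L where l: "set L \<subseteq> insert x T" "pv j1 j5 (Imp (conjl L) \<phi>)" unfolding ent_def by blast
  let ?L = "filter (\<lambda>y. y \<noteq> x) L"
  have s: "set L \<subseteq> insert x (set ?L)" by auto
  have "taut (Imp (Imp (conjl L) \<phi>) (Imp (conjl ?L) (Imp x \<phi>)))"
    unfolding taut_def using s by auto
  then have "pv j1 j5 (Imp (conjl ?L) (Imp x \<phi>))" using l(2) by (rule taut_mp)
  moreover have "set ?L \<subseteq> T" using l(1) by auto
  ultimately show ?thesis unfolding ent_def by blast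
qed

end

locale cx =
  fixes j1 j5 :: bool and A :: fm
begin

abbreviation "prv \<equiv> prov j1 j5"
abbreviation "en \<equiv> ent j1 j5"

definition Es :: "fm \<Rightarrow> fm list \<Rightarrow> fm list" where
  "Es D ys = (if j1 then [D] else []) @ (if j5 then [Dia D] else []) @ ys"
definition psi :: "fm \<Rightarrow> fm \<Rightarrow> fm list \<Rightarrow> fm" where
  "psi C D ys = And C (conjl (map Neg (Es D ys)))"

definition seeds :: "fm list" where
  "seeds = [A, Box (Neg Bot)] @ [Box (Neg X). X \<leftarrow> subl A]
     @ [Box (Neg (And D' (Neg D))). D' \<leftarrow> subl A, D \<leftarrow> subl A]
     @ [Box (Neg (psi C D ys)). C \<leftarrow> subl A, D \<leftarrow> subl A, ys \<leftarrow> subseqs (subl A)]"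

definition PhiL :: "fm list" where "PhiL = concat (map subl seeds)"
definition Phi :: "fm set" where "Phi = set PhiL"

lemma Phi_eq: "Phi = (\<Union>s\<in>set seeds. sub s)"
  by (auto simp: Phi_def PhiL_def sub_def)

lemma finite_Phi[simp]: "finite Phi" by (simp add: Phi_def)

lemma Phi_closed: "x \<in> Phi \<Longrightarrow> y \<in> sub x \<Longrightarrow> y \<in> Phi"
  unfolding Phi_eq using sub_trans by blast

lemma seed_Phi: "s \<in> set seeds \<Longrightarrow> s \<in> Phi"
  unfolding Phi_eq using sub_refl by blast

lemma Phi_sub:
  "Imp a b \<in> Phi \<Longrightarrow> a \<in> Phi" "Imp a b \<in> Phi \<Longrightarrow> b \<in> Phi"
  "Or a b \<in> Phi \<Longrightarrow> a \<in> Phi" "Or a b \<in> Phi \<Longrightarrow> b \<in> Phi"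
  "And a b \<in> Phi \<Longrightarrow> a \<in> Phi" "And a b \<in> Phi \<Longrightarrow> b \<in> Phi"
  "Box a \<in> Phi \<Longrightarrow> a \<in> Phi" "Rhd a b \<in> Phi \<Longrightarrow> a \<in> Phi" "Rhd a b \<in> Phi \<Longrightarrow> b \<in> Phi"
  by (auto intro: Phi_closed)

lemma Neg_Phi: "Neg a \<in> Phi \<Longrightarrow> a \<in> Phi" "Neg a \<in> Phi \<Longrightarrow> Bot \<in> Phi"
  unfolding Neg_def by (auto intro: Phi_closed)

lemma subA_Phi: "x \<in> sub A \<Longrightarrow> x \<in> Phi"
  using Phi_closed seed_Phi[of A] by (auto simp: seeds_def)

lemma BoxNeg_Phi: "X \<in> sub A \<Longrightarrow> Box (Neg X) \<in> Phi"
  by (rule seed_Phi) (auto simp: seeds_def sub_def)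

lemma BoxNegBot_Phi: "Box (Neg Bot) \<in> Phi"
  by (rule seed_Phi) (auto simp: seeds_def sub_def)

lemma Bot_Phi: "Bot \<in> Phi"
  using BoxNegBot_Phi Phi_sub(7) Neg_Phi by blast

lemma BoxNegAnd_Phi: "D' \<in> sub A \<Longrightarrow> D \<in> sub A \<Longrightarrow> Box (Neg (And D' (Neg D))) \<in> Phi"
  by (rule seed_Phi) (auto simp: seeds_def sub_def)

lemma BoxNegPsi_Phi: "C \<in> sub A \<Longrightarrow> D \<in> sub A \<Longrightarrow> ys \<in> set (subseqs (subl A)) \<Longrightarrow> Box (Neg (psi C D ys)) \<in> Phi"
  by (rule seed_Phi) (simp add: seeds_def sub_def; blast)

definition lits :: "fm set \<Rightarrow> fm set" where "lits Q = Q \<union> Neg ` (Phi - Q)"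
definition cons :: "fm set \<Rightarrow> bool" where "cons S \<longleftrightarrow> \<not> en S Bot"
definition atom :: "fm set \<Rightarrow> bool" where "atom Q \<longleftrightarrow> Q \<subseteq> Phi \<and> cons (lits Q)"

lemma cons_split: "cons T \<Longrightarrow> cons (insert x T) \<or> cons (insert (Neg x) T)"
proof (rule ccontr)
  assume c: "cons T" and n: "\<not> (cons (insert x T) \<or> cons (insert (Neg x) T))"
  then have "en T (Imp x Bot)" "en T (Imp (Neg x) Bot)"
    unfolding cons_def by (auto intro: ent_deduct)
  then have "en T Bot" by (rule ent_taut2) (simp add: taut_def)
  then show False using c by (simp add: cons_def)
qed

lemma cons_mono: "cons T \<Longrightarrow> S \<subseteq> T \<Longrightarrow> cons S"
  unfolding cons_def using ent_mono by blast

lemma lindenbaum_list: "cons S \<Longrightarrow> \<exists>Q \<subseteq> set xs. cons (S \<union> Q \<union> Neg ` (set xs - Q))"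
proof (induct xs)
  case Nil then show ?case by auto
next
  case (Cons x xs)
  then obtain Q where q: "Q \<subseteq> set xs" "cons (S \<union> Q \<union> Neg ` (set xs - Q))" by blast
  show ?case
  proof (cases "x \<in> set xs")
    case True
    then show ?thesis using q by (intro exI[of _ Q]) (auto simp: insert_absorb)
  next
    case False
    from cons_split[OF q(2)] show ?thesis
    proof
      assume h: "cons (insert x (S \<union> Q \<union> Neg ` (set xs - Q)))"
      have "S \<union> insert x Q \<union> Neg ` (set (x # xs) - insert x Q) = insert x (S \<union> Q \<union> Neg ` (set xs - Q))"
        using False by auto
      then show ?thesis using h q(1) by (intro exI[of _ "insert x Q"]) auto
    next
      assume h: "cons (insert (Neg x) (S \<union> Q \<union> Neg ` (set xs - Q)))"
      have "x \<notin> Q" using False q(1) by auto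
      then have "S \<union> Q \<union> Neg ` (set (x # xs) - Q) = insert (Neg x) (S \<union> Q \<union> Neg ` (set xs - Q))"
        by auto
      then show ?thesis using h q(1) by (intro exI[of _ Q]) auto
    qed
  qed
qed

lemma lindenbaum: "cons S \<Longrightarrow> \<exists>Q. atom Q \<and> cons (S \<union> lits Q)"
proof -
  assume "cons S"
  from lindenbaum_list[OF this, of PhiL] obtain Q where
    q: "Q \<subseteq> Phi" "cons (S \<union> lits Q)" by (auto simp: Phi_def lits_def Un_assoc)
  then show ?thesis unfolding atom_def by (auto intro: cons_mono)
qed

lemma cons_contr: "cons S \<Longrightarrow> \<phi> \<in> S \<Longrightarrow> Neg \<phi> \<in> S \<Longrightarrow> False"
proof -
  assume "cons S" "\<phi> \<in> S" "Neg \<phi> \<in> S"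
  then have "en S Bot" by (meson ent_mem ent_taut2 peval_Neg peval.simps(3,4) taut_def)
  then show False using \<open>cons S\<close> by (simp add: cons_def)
qed

lemma lind_in: "cons (S \<union> lits Q) \<Longrightarrow> \<phi> \<in> Phi \<Longrightarrow> \<phi> \<in> S \<Longrightarrow> \<phi> \<in> Q"
  using cons_contr[of "S \<union> lits Q" \<phi>] by (auto simp: lits_def)

lemma lind_out: "cons (S \<union> lits Q) \<Longrightarrow> Neg \<phi> \<in> S \<Longrightarrow> \<phi> \<notin> Q"
  using cons_contr[of "S \<union> lits Q" \<phi>] by (auto simp: lits_def)

abbreviation qe :: "fm set \<Rightarrow> fm \<Rightarrow> bool" where "qe Q \<equiv> en (lits Q)"

lemma qe_in: "atom Q \<Longrightarrow> \<phi> \<in> Phi \<Longrightarrow> qe Q \<phi> \<longleftrightarrow> \<phi> \<in> Q"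
proof
  assume a: "atom Q" "\<phi> \<in> Phi" "qe Q \<phi>"
  show "\<phi> \<in> Q"
  proof (rule ccontr)
    assume "\<phi> \<notin> Q"
    then have "qe Q (Neg \<phi>)" using a by (intro ent_mem) (auto simp: lits_def)
    then have "qe Q Bot" using a(3) by (rule ent_taut2) (simp add: taut_def)
    then show False using a by (simp add: atom_def cons_def)
  qed
next
  assume "\<phi> \<in> Q" then show "qe Q \<phi>" by (intro ent_mem) (auto simp: lits_def)
qed

lemma qe_out: "atom Q \<Longrightarrow> \<phi> \<in> Phi \<Longrightarrow> qe Q (Neg \<phi>) \<longleftrightarrow> \<phi> \<notin> Q"
proof
  assume a: "atom Q" "\<phi> \<in> Phi" "qe Q (Neg \<phi>)"
  show "\<phi> \<notin> Q"
  proof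
    assume "\<phi> \<in> Q"
    then have "qe Q \<phi>" by (intro ent_mem) (auto simp: lits_def)
    then have "qe Q Bot" using a(3) by (rule ent_taut2) (simp add: taut_def)
    then show False using a by (simp add: atom_def cons_def)
  qed
next
  assume "atom Q" "\<phi> \<in> Phi" "\<phi> \<notin> Q" then show "qe Q (Neg \<phi>)" by (intro ent_mem) (auto simp: lits_def)
qed

lemma qe_bot: "atom Q \<Longrightarrow> \<not> qe Q Bot"
  by (simp add: atom_def cons_def)

lemma atom_Bot: "atom Q \<Longrightarrow> Bot \<notin> Q"
  using qe_in[of Q Bot] Bot_Phi qe_bot by blast

lemma atom_prov: "atom Q \<Longrightarrow> \<phi> \<in> Phi \<Longrightarrow> prv \<phi> \<Longrightarrow> \<phi> \<in> Q"
  using qe_in ent_prov by blast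

end


context cx begin

definition prec :: "fm set \<Rightarrow> fm set \<Rightarrow> bool" where
  "prec P Q \<longleftrightarrow> (\<forall>X. Box X \<in> P \<longrightarrow> X \<in> Q \<and> Box X \<in> Q) \<and> (\<exists>E. Box E \<in> Q \<and> Box E \<notin> P)"

lemma prec_trans: "prec P Q \<Longrightarrow> prec Q T \<Longrightarrow> prec P T"
  unfolding prec_def by blast

lemma four_list: "prv (Imp (conjl (map Box Bs)) (conjl (map Box (Bs @ map Box Bs))))"
proof (rule imp_conjl)
  fix x assume "x \<in> set (map Box (Bs @ map Box Bs))"
  then obtain X where X: "X \<in> set Bs" "x = Box X \<or> x = Box (Box X)" by auto
  have m: "prv (Imp (conjl (map Box Bs)) (Box X))"
    using X(1) by (intro taut_pv) (auto simp: taut_def)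
  show "prv (Imp (conjl (map Box Bs)) x)"
    using X(2) imp_trans[OF m four] m by blast
qed

lemma succ:
  assumes P: "atom P" and B: "Box B \<in> Phi" "Box B \<notin> P"
  shows "\<exists>Q. atom Q \<and> prec P Q \<and> B \<notin> Q \<and> Box B \<in> Q"
proof -
  have "finite P" using P finite_Phi unfolding atom_def by (meson finite_subset)
  then have "finite (Box -` P)" by (rule finite_vimageI) (simp add: inj_def)
  from finite_list[OF this] obtain Bs where Bs: "set Bs = Box -` P" by (elim exE)
  let ?S = "{Neg B, Box B} \<union> set Bs \<union> Box ` set Bs"
  have "cons ?S"
  proof (rule ccontr)
    assume "\<not> cons ?S"
    then obtain L where L: "set L \<subseteq> ?S" "prv (Imp (conjl L) Bot)" unfolding cons_def ent_def by blast
    have "taut (Imp (Imp (conjl L) Bot) (Imp (conjl (Bs @ map Box Bs)) (Imp (Box B) B)))"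
      unfolding taut_def
    proof (intro allI)
      fix g
      show "peval g (Imp (Imp (conjl L) Bot) (Imp (conjl (Bs @ map Box Bs)) (Imp (Box B) B)))"
      proof (cases "peval g B")
        case False
        have key: "peval g x" if "x \<in> set L" "\<forall>y\<in>set Bs. peval g y" "\<forall>y\<in>set Bs. g (Box y)" "g (Box B)" for x
        proof -
          have "x \<in> ?S" using L(1) that(1) by blast
          then show "peval g x" using that False by auto
        qed
        have "(\<forall>x\<in>set (Bs @ map Box Bs). peval g x) \<longrightarrow> g (Box B) \<longrightarrow> (\<forall>x\<in>set L. peval g x)"
        proof (intro impI)
          assume h: "\<forall>x\<in>set (Bs @ map Box Bs). peval g x" "g (Box B)"
          have h1: "\<forall>y\<in>set Bs. peval g y" using h by simp
          have h2: "\<forall>y\<in>set Bs. g (Box y)"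
          proof
            fix y assume "y \<in> set Bs"
            then have "Box y \<in> set (Bs @ map Box Bs)" by simp
            then show "g (Box y)" using h(1) by (metis peval.simps(7))
          qed
          show "\<forall>x\<in>set L. peval g x" using key h1 h2 h(2) by blast
        qed
        then show ?thesis using False by (simp only: peval.simps peval_conjl) blast
      qed simp
    qed
    then have "prv (Imp (conjl (Bs @ map Box Bs)) (Imp (Box B) B))" using L(2) by (rule taut_mp)
    then have "prv (Imp (conjl (map Box (Bs @ map Box Bs))) (Box (Imp (Box B) B)))" by (rule box_conjl)
    then have "prv (Imp (conjl (map Box Bs)) (Box (Imp (Box B) B)))" by (rule imp_trans[OF four_list])
    then have "prv (Imp (conjl (map Box Bs)) (Box B))" by (rule imp_trans[OF _ ax_L])
    moreover have "set (map Box Bs) \<subseteq> lits P" using Bs by (auto simp: lits_def)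
    ultimately have "qe P (Box B)" unfolding ent_def by blast
    then show False using qe_in[OF P B(1)] B(2) by blast
  qed
  from lindenbaum[OF this] obtain Q where Q: "atom Q" "cons (?S \<union> lits Q)" by blast
  have QPhi: "Q \<subseteq> Phi" using Q by (simp add: atom_def)
  have PPhi: "P \<subseteq> Phi" using P by (simp add: atom_def)
  have "B \<notin> Q" using lind_out[OF Q(2)] by blast
  moreover have "Box B \<in> Q" using lind_in[OF Q(2)] B(1) by blast
  moreover have "\<forall>X. Box X \<in> P \<longrightarrow> X \<in> Q \<and> Box X \<in> Q"
  proof (intro allI impI)
    fix X assume "Box X \<in> P"
    then have "X \<in> set Bs" "Box X \<in> Phi" "X \<in> Phi" using Bs PPhi Phi_sub(7) by auto
    then show "X \<in> Q \<and> Box X \<in> Q" using lind_in[OF Q(2)] by blast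
  qed
  ultimately show ?thesis using Q(1) B(2) unfolding prec_def by blast
qed

end


context cx begin

lemma notneg_in: "atom Q \<Longrightarrow> Neg \<phi> \<in> Phi \<Longrightarrow> Neg \<phi> \<notin> Q \<Longrightarrow> \<phi> \<in> Q"
proof -
  assume a: "atom Q" "Neg \<phi> \<in> Phi" "Neg \<phi> \<notin> Q"
  show "\<phi> \<in> Q"
  proof (rule ccontr)
    assume "\<phi> \<notin> Q"
    then have "qe Q (Neg \<phi>)" using qe_out[OF a(1) Neg_Phi(1)[OF a(2)]] by blast
    then have "Neg \<phi> \<in> Q" using qe_in[OF a(1) a(2)] by blast
    then show False using a(3) by blast
  qed
qed

lemma qe_contr: "atom Q \<Longrightarrow> qe Q \<phi> \<Longrightarrow> qe Q (Neg \<phi>) \<Longrightarrow> False"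
proof -
  assume h: "atom Q" "qe Q \<phi>" "qe Q (Neg \<phi>)"
  have t: "taut (Imp \<phi> (Imp (Neg \<phi>) Bot))" by (simp add: taut_def)
  have "qe Q Bot" using ent_taut2[OF h(2) h(3) t] .
  then show False using qe_bot \<open>atom Q\<close> by blast
qed

lemma rhd_C_D: "prv (Imp (conjl [Box (Neg D), Rhd C D]) (Box (Neg C)))"
proof -
  have a: "prv (Imp (Box (Imp D Bot)) (Imp (Rhd C D) (Rhd C Bot)))" by (rule ax_J4p)
  have b: "prv (Iff (Box (Neg C)) (Rhd C Bot))" by (rule ax_J6)
  have t: "taut (Imp (Imp (Box (Imp D Bot)) (Imp (Rhd C D) (Rhd C Bot))) (Imp (Iff (Box (Neg C)) (Rhd C Bot))
     (Imp (conjl [Box (Neg D), Rhd C D]) (Box (Neg C)))))" by (simp add: taut_def Neg_def Iff_def)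
  show ?thesis using taut_mp2[OF t a b] .
qed

lemma exist_rhd:
  assumes P: "atom P" and G: "atom G" "prec P G" and r: "Rhd C D \<in> sub A" "Rhd C D \<in> P"
    and c: "C \<in> G"
  shows "\<exists>T. atom T \<and> prec P T \<and> D \<in> T"
proof -
  have CD: "C \<in> sub A" "D \<in> sub A" using sub_trans[OF r(1)] by auto
  have bD: "Box (Neg D) \<in> Phi" and bC: "Box (Neg C) \<in> Phi" using CD BoxNeg_Phi by auto
  have nb: "Box (Neg D) \<notin> P"
  proof
    assume "Box (Neg D) \<in> P"
    then have "qe P (Box (Neg C))" using r(2)
      by (intro ent_taut[OF _ rhd_C_D]) (auto intro: ent_mem simp: lits_def)
    then have "Box (Neg C) \<in> P" using qe_in[OF P bC] by blast
    then have "Neg C \<in> G" using G(2) by (simp add: prec_def)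
    moreover have "Neg C \<in> Phi" using Phi_sub(7)[OF bC] .
    ultimately have "qe G (Neg C)" using qe_in[OF G(1)] by blast
    moreover have "qe G C" using c by (intro ent_mem) (simp add: lits_def)
    ultimately show False using qe_contr[OF G(1)] by blast
  qed
  from succ[OF P bD nb] obtain T where T: "atom T" "prec P T" "Neg D \<notin> T" by blast
  have "D \<in> T" using notneg_in[OF T(1) _ T(3)] Phi_sub(7)[OF bD] by blast
  then show ?thesis using T by blast
qed

lemma rhd_disjl: "(\<And>E. E \<in> set Fs \<Longrightarrow> en S (Rhd E D)) \<Longrightarrow> en S (Rhd (disjl Fs) D)"
proof (induct Fs)
  case Nil then show ?case using rhd_bot_any ent_prov by auto
next
  case (Cons E Fs)
  have "en S (Rhd E D)" "en S (Rhd (disjl Fs) D)" using Cons by auto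
  moreover have "prv (Imp (And (Rhd E D) (Rhd (disjl Fs) D)) (Rhd (Or E (disjl Fs)) D))" by (rule ax_J3)
  moreover have "taut (Imp (Rhd E D) (Imp (Rhd (disjl Fs) D) (And (Rhd E D) (Rhd (disjl Fs) D))))"
    by (simp add: taut_def)
  ultimately have "en S (Rhd (Or E (disjl Fs)) D)"
    using ent_taut2 ent_imp by metis
  then show ?case by simp
qed

lemma bad_rhd:
  assumes d: "Rhd E D' \<in> P" "Box (Neg (And D' (Neg D))) \<in> P"
  shows "qe P (Rhd E D)"
proof -
  have a: "prv (Imp (Box (Neg (And D' (Neg D)))) (Box (Imp D' D)))"
    by (rule box_mono, rule taut_pv) (simp add: taut_def)
  have b: "prv (Imp (Box (Imp D' D)) (Imp (Rhd E D') (Rhd E D)))" by (rule ax_J4p)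
  have q1: "qe P (Box (Neg (And D' (Neg D))))" using d(2) by (intro ent_mem) (simp add: lits_def)
  have q2: "qe P (Rhd E D')" using d(1) by (intro ent_mem) (simp add: lits_def)
  have q3: "qe P (Box (Imp D' D))" using ent_imp[OF q1 a] .
  have q4: "qe P (Imp (Rhd E D') (Rhd E D))" using ent_imp[OF q3 b] .
  show ?thesis using ent_mp[OF q4 q2] .
qed

lemma Es_cases:
  assumes "E \<in> set (Es D ys)"
  obtains "j1" "E = D" | "j5" "E = Dia D" | "E \<in> set ys"
  using assms unfolding Es_def by (cases j1; cases j5) auto

lemma npsi_lemma:
  assumes P: "atom P" and r: "Rhd C D \<in> sub A" "Rhd C D \<notin> P"
    and ys: "\<And>E. E \<in> set ys \<Longrightarrow> \<exists>D'. Rhd E D' \<in> P \<and> Box (Neg (And D' (Neg D))) \<in> P"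
  shows "Box (Neg (psi C D ys)) \<notin> P"
proof
  assume h: "Box (Neg (psi C D ys)) \<in> P"
  have each: "qe P (Rhd E D)" if E: "E \<in> set (Es D ys)" for E
    using E
  proof (cases rule: Es_cases)
    case 1
    have "prv (Box (Imp D D))" by (rule nec, rule taut_pv) (simp add: taut_def)
    then have "prv (Rhd D D)" using ax_J1[OF 1(1)] mp by blast
    then show ?thesis using 1 ent_prov by blast
  next
    case 2
    then show ?thesis using ax_J5 ent_prov by blast
  next
    case 3
    then obtain D' where d: "Rhd E D' \<in> P" "Box (Neg (And D' (Neg D))) \<in> P" using ys by blast
    then show ?thesis by (rule bad_rhd)
  qed
  have d: "qe P (Rhd (disjl (Es D ys)) D)" using each by (rule rhd_disjl)
  have e: "prv (Imp (Box (Neg (psi C D ys))) (Box (Imp C (disjl (Es D ys)))))"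
    by (rule box_mono, rule taut_pv) (auto simp: taut_def psi_def)
  have q: "qe P (Box (Neg (psi C D ys)))" using h by (intro ent_mem) (simp add: lits_def)
  have f: "qe P (Box (Imp C (disjl (Es D ys))))" using ent_imp[OF q e] .
  have "qe P (Rhd C D)"
    using f d by (rule ent_mp[OF ent_mp[OF ent_prov[OF rhd_box_left]]])
  then have "Rhd C D \<in> P" using qe_in[OF P] subA_Phi r(1) by blast
  then show False using r(2) by blast
qed

lemma psi_facts:
  assumes G: "atom G" and q: "qe G (psi C D ys)" and bp: "Box (Neg (psi C D ys)) \<in> Phi"
  shows "qe G C" "\<And>E. E \<in> set (Es D ys) \<Longrightarrow> E \<notin> G \<and> E \<in> Phi"
proof -
  show "qe G C" using q by (rule ent_taut1) (simp add: taut_def psi_def)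
  fix E assume E: "E \<in> set (Es D ys)"
  have t: "taut (Imp (psi C D ys) (Neg E))" using E by (simp add: taut_def psi_def)
  have qn: "qe G (Neg E)" using ent_taut1[OF q t] .
  have "Neg (psi C D ys) \<in> Phi" using bp Phi_sub(7) by blast
  then have "psi C D ys \<in> Phi" by (rule Neg_Phi(1))
  then have c1: "conjl (map Neg (Es D ys)) \<in> Phi" unfolding psi_def by (rule Phi_sub(6))
  have "Neg E \<in> set (map Neg (Es D ys))" using E by simp
  then have "Neg E \<in> sub (conjl (map Neg (Es D ys)))" using sub_conjl[of "Neg E"] sub_refl by blast
  then have "Neg E \<in> Phi" using Phi_closed c1 by blast
  then have "E \<in> Phi" by (rule Neg_Phi(1))
  then show "E \<notin> G \<and> E \<in> Phi" using qe_out[OF G] qn by blast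
qed

lemma witness:
  assumes P: "atom P" and r: "Rhd C D \<in> sub A" "Rhd C D \<notin> P"
  shows "\<exists>G. atom G \<and> prec P G \<and> C \<in> G \<and> (j1 \<longrightarrow> D \<notin> G) \<and> (j5 \<longrightarrow> Box (Neg D) \<in> G)
     \<and> (\<forall>C' D'. Rhd C' D' \<in> sub A \<longrightarrow> Rhd C' D' \<in> P \<longrightarrow> C' \<in> G \<longrightarrow>
           (\<exists>T. atom T \<and> prec P T \<and> D' \<in> T \<and> D \<notin> T))"
proof -
  have CD: "C \<in> sub A" "D \<in> sub A" using sub_trans[OF r(1)] by auto
  define Bad where "Bad = {C' \<in> sub A. \<exists>D'. Rhd C' D' \<in> sub A \<and> Rhd C' D' \<in> P \<and> Box (Neg (And D' (Neg D))) \<in> P}"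
  have "Bad \<in> Pow (set (subl A))" by (auto simp: Bad_def sub_def)
  then have "Bad \<in> set ` set (subseqs (subl A))" by (simp add: subseqs_powset)
  then obtain ys where ys: "ys \<in> set (subseqs (subl A))" "set ys = Bad" by auto
  have ysb: "\<exists>D'. Rhd E D' \<in> P \<and> Box (Neg (And D' (Neg D))) \<in> P" if "E \<in> set ys" for E
    using that ys(2) unfolding Bad_def by blast
  have bpsi: "Box (Neg (psi C D ys)) \<in> Phi" using BoxNegPsi_Phi CD ys(1) by blast
  have npsi: "Box (Neg (psi C D ys)) \<notin> P" using npsi_lemma[OF P r ysb] by blast
  from succ[OF P bpsi npsi] obtain G where G: "atom G" "prec P G" "Neg (psi C D ys) \<notin> G" by blast
  have psiPhi: "Neg (psi C D ys) \<in> Phi" using bpsi Phi_sub(7) by blast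
  have "psi C D ys \<in> G" using notneg_in[OF G(1) psiPhi G(3)] .
  then have qpsi: "qe G (psi C D ys)" by (intro ent_mem) (simp add: lits_def)
  note pf = psi_facts[OF G(1) qpsi bpsi]
  have cG: "C \<in> G" using pf(1) qe_in[OF G(1)] subA_Phi CD by blast
  have j1c: "j1 \<longrightarrow> D \<notin> G"
  proof
    assume j1
    then have "D \<in> set (Es D ys)" unfolding Es_def by simp
    then show "D \<notin> G" using pf(2) by blast
  qed
  have j5c: "j5 \<longrightarrow> Box (Neg D) \<in> G"
  proof
    assume j5
    then have "Dia D \<in> set (Es D ys)" unfolding Es_def by simp
    then have "Dia D \<notin> G" "Dia D \<in> Phi" using pf(2) by blast+
    then show "Box (Neg D) \<in> G" using notneg_in[OF G(1)] by (simp add: Dia_def)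
  qed
  have g4: "\<exists>T. atom T \<and> prec P T \<and> D' \<in> T \<and> D \<notin> T"
    if h: "Rhd C' D' \<in> sub A" "Rhd C' D' \<in> P" "C' \<in> G" for C' D'
  proof -
    have C'D': "C' \<in> sub A" "D' \<in> sub A" using sub_trans[OF h(1)] by auto
    have "C' \<notin> Bad"
    proof
      assume "C' \<in> Bad"
      then have "C' \<in> set (Es D ys)" using ys(2) by (simp add: Es_def)
      then show False using pf(2) h(3) by blast
    qed
    then have nb: "Box (Neg (And D' (Neg D))) \<notin> P" using h C'D' unfolding Bad_def by blast
    have bb: "Box (Neg (And D' (Neg D))) \<in> Phi" using BoxNegAnd_Phi C'D' CD by blast
    from succ[OF P bb nb] obtain T where T: "atom T" "prec P T" "Neg (And D' (Neg D)) \<notin> T" by blast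
    have "And D' (Neg D) \<in> T" using notneg_in[OF T(1) Phi_sub(7)[OF bb] T(3)] .
    then have q: "qe T (And D' (Neg D))" by (intro ent_mem) (simp add: lits_def)
    have "qe T D'" using q by (rule ent_taut1) (simp add: taut_def)
    then have "D' \<in> T" using qe_in[OF T(1)] subA_Phi C'D' by blast
    moreover have "qe T (Neg D)" using q by (rule ent_taut1) (simp add: taut_def)
    then have "D \<notin> T" using qe_out[OF T(1)] subA_Phi CD by blast
    ultimately show ?thesis using T by blast
  qed
  show ?thesis using G(1,2) cG j1c j5c g4 by blast
qed

end


context cx begin

lemma atom_imp: "atom Q \<Longrightarrow> Imp a b \<in> Phi \<Longrightarrow> (Imp a b \<in> Q \<longleftrightarrow> (a \<in> Q \<longrightarrow> b \<in> Q))"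
proof -
  assume Q: "atom Q" and i: "Imp a b \<in> Phi"
  have a: "a \<in> Phi" and b: "b \<in> Phi" using i by (auto intro: Phi_closed)
  show ?thesis
  proof
    assume "Imp a b \<in> Q"
    then have q: "qe Q (Imp a b)" by (intro ent_mem) (simp add: lits_def)
    show "a \<in> Q \<longrightarrow> b \<in> Q"
    proof
      assume "a \<in> Q"
      then have "qe Q a" by (intro ent_mem) (simp add: lits_def)
      then have "qe Q b" using ent_mp[OF q] by blast
      then show "b \<in> Q" using qe_in[OF Q b] by blast
    qed
  next
    assume h: "a \<in> Q \<longrightarrow> b \<in> Q"
    show "Imp a b \<in> Q"
    proof (cases "a \<in> Q")
      case True
      then have "qe Q b" using h by (intro ent_mem) (simp add: lits_def)
      then have "qe Q (Imp a b)" by (rule ent_taut1) (simp add: taut_def)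
      then show ?thesis using qe_in[OF Q i] by blast
    next
      case False
      then have "qe Q (Neg a)" using qe_out[OF Q a] by blast
      then have "qe Q (Imp a b)" by (rule ent_taut1) (simp add: taut_def)
      then show ?thesis using qe_in[OF Q i] by blast
    qed
  qed
qed

lemma atom_and: "atom Q \<Longrightarrow> And a b \<in> Phi \<Longrightarrow> (And a b \<in> Q \<longleftrightarrow> (a \<in> Q \<and> b \<in> Q))"
proof -
  assume Q: "atom Q" and i: "And a b \<in> Phi"
  have a: "a \<in> Phi" and b: "b \<in> Phi" using i by (auto intro: Phi_closed)
  show ?thesis
  proof
    assume "And a b \<in> Q"
    then have q: "qe Q (And a b)" by (intro ent_mem) (simp add: lits_def)
    have "qe Q a" using q by (rule ent_taut1) (simp add: taut_def)
    moreover have "qe Q b" using q by (rule ent_taut1) (simp add: taut_def)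
    ultimately show "a \<in> Q \<and> b \<in> Q" using qe_in[OF Q a] qe_in[OF Q b] by blast
  next
    assume h: "a \<in> Q \<and> b \<in> Q"
    then have qa: "qe Q a" and qb: "qe Q b" by (auto intro: ent_mem simp: lits_def)
    have t: "taut (Imp a (Imp b (And a b)))" by (simp add: taut_def)
    have "qe Q (And a b)" using ent_taut2[OF qa qb t] .
    then show "And a b \<in> Q" using qe_in[OF Q i] by blast
  qed
qed

lemma atom_or: "atom Q \<Longrightarrow> Or a b \<in> Phi \<Longrightarrow> (Or a b \<in> Q \<longleftrightarrow> (a \<in> Q \<or> b \<in> Q))"
proof -
  assume Q: "atom Q" and i: "Or a b \<in> Phi"
  have a: "a \<in> Phi" and b: "b \<in> Phi" using i by (auto intro: Phi_closed)
  show ?thesis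
  proof
    assume "Or a b \<in> Q"
    then have q: "qe Q (Or a b)" by (intro ent_mem) (simp add: lits_def)
    show "a \<in> Q \<or> b \<in> Q"
    proof (rule ccontr)
      assume "\<not> (a \<in> Q \<or> b \<in> Q)"
      then have qa: "qe Q (Neg a)" and qb: "qe Q (Neg b)" using qe_out[OF Q a] qe_out[OF Q b] by auto
      have t: "taut (Imp (Or a b) (Imp (Neg a) b))" by (simp add: taut_def)
      have "qe Q b" using ent_taut2[OF q qa t] .
      then show False using qe_contr[OF Q] \<open>qe Q (Neg b)\<close> by blast
    qed
  next
    assume h: "a \<in> Q \<or> b \<in> Q"
    then have "qe Q (Or a b)"
    proof
      assume "a \<in> Q"
      then have "qe Q a" by (intro ent_mem) (simp add: lits_def)
      then show ?thesis by (rule ent_taut1) (simp add: taut_def)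
    next
      assume "b \<in> Q"
      then have "qe Q b" by (intro ent_mem) (simp add: lits_def)
      then show ?thesis by (rule ent_taut1) (simp add: taut_def)
    qed
    then show "Or a b \<in> Q" using qe_in[OF Q i] by blast
  qed
qed

lemma atom_negin: "atom Q \<Longrightarrow> Neg a \<in> Q \<Longrightarrow> a \<in> Phi \<Longrightarrow> a \<notin> Q"
proof -
  assume h: "atom Q" "Neg a \<in> Q" "a \<in> Phi"
  have "qe Q (Neg a)" using h(2) by (intro ent_mem) (simp add: lits_def)
  then show ?thesis using qe_out[OF h(1) h(3)] by blast
qed

definition good :: "fm set \<Rightarrow> fm set \<times> fm \<Rightarrow> bool" where
  "good P y \<longleftrightarrow> atom (fst y) \<and> prec P (fst y) \<and> snd y \<in> Phi \<and> (j1 \<longrightarrow> snd y \<notin> fst y)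
     \<and> (j5 \<longrightarrow> Box (Neg (snd y)) \<in> fst y)
     \<and> (\<forall>C' D'. Rhd C' D' \<in> sub A \<longrightarrow> Rhd C' D' \<in> P \<longrightarrow> C' \<in> fst y \<longrightarrow>
           (\<exists>T. atom T \<and> prec P T \<and> D' \<in> T \<and> snd y \<notin> T))"

lemma good_bot: "atom P \<Longrightarrow> atom T \<Longrightarrow> prec P T \<Longrightarrow> good P (T, Bot)"
proof -
  assume P: "atom P" and T: "atom T" "prec P T"
  have "prv (Box (Neg Bot))" by (rule nec, rule taut_pv) (simp add: taut_def)
  then have bb: "Box (Neg Bot) \<in> T" using atom_prov[OF T(1) BoxNegBot_Phi] by blast
  have g4: "\<exists>T'. atom T' \<and> prec P T' \<and> D' \<in> T' \<and> Bot \<notin> T'"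
    if h: "Rhd C' D' \<in> sub A" "Rhd C' D' \<in> P" "C' \<in> T" for C' D'
  proof -
    obtain T' where "atom T'" "prec P T'" "D' \<in> T'" using exist_rhd[OF P T h] by blast
    moreover have "Bot \<notin> T'" using atom_Bot[OF \<open>atom T'\<close>] .
    ultimately show ?thesis by blast
  qed
  have nb: "Bot \<notin> T" using atom_Bot[OF T(1)] .
  show ?thesis unfolding good_def fst_conv snd_conv
    using T bb Bot_Phi nb g4 by blast
qed

inductive_set Wn :: "(fm set \<times> fm) list set" where
  base: "atom G \<Longrightarrow> D \<in> Phi \<Longrightarrow> [(G, D)] \<in> Wn"
| step: "xs \<in> Wn \<Longrightarrow> good (fst (last xs)) y \<Longrightarrow> xs @ [y] \<in> Wn"

definition Rm :: "(fm set \<times> fm) list \<Rightarrow> (fm set \<times> fm) list \<Rightarrow> bool" where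
  "Rm xs ys \<longleftrightarrow> xs \<in> Wn \<and> ys \<in> Wn \<and> (\<exists>zs. zs \<noteq> [] \<and> ys = xs @ zs)"

definition Sm :: "(fm set \<times> fm) list \<Rightarrow> (fm set \<times> fm) list \<Rightarrow> bool" where
  "Sm ys zs \<longleftrightarrow> ys \<in> Wn \<and> zs \<in> Wn \<and>
     ((2 \<le> length ys \<and> (\<exists>us. us \<noteq> [] \<and> zs = butlast ys @ us)) \<longrightarrow> snd (last ys) \<notin> fst (last zs))"

definition Vm :: "(fm set \<times> fm) list \<Rightarrow> nat \<Rightarrow> bool" where
  "Vm xs n \<longleftrightarrow> Var n \<in> fst (last xs)"

lemma W_ne: "xs \<in> Wn \<Longrightarrow> xs \<noteq> [] \<and> atom (fst (last xs))"
  by (induct rule: Wn.induct) (auto simp: good_def)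

lemma W_prefix: "ws \<in> Wn \<Longrightarrow> ws = xs @ zs \<Longrightarrow> xs \<noteq> [] \<Longrightarrow> xs \<in> Wn"
proof (induct arbitrary: xs zs rule: Wn.induct)
  case (base G D)
  then show ?case by (cases xs) (auto intro: Wn.base)
next
  case (step ys y)
  show ?case
  proof (cases zs rule: rev_exhaust)
    case Nil
    then have "xs = ys @ [y]" using step(4) by simp
    then show ?thesis using Wn.step[OF step(1) step(3)] by simp
  next
    case (snoc zs' z)
    then have "ys = xs @ zs'" using step(4) by auto
    then show ?thesis using step by blast
  qed
qed

lemma W_prec: "ws \<in> Wn \<Longrightarrow> ws = xs @ zs \<Longrightarrow> xs \<noteq> [] \<Longrightarrow> zs \<noteq> [] \<Longrightarrow> prec (fst (last xs)) (fst (last ws))"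
proof (induct arbitrary: xs zs rule: Wn.induct)
  case (base G D)
  then show ?case by (cases xs) auto
next
  case (step ys y)
  obtain zs' where zs: "zs = zs' @ [y]" "ys = xs @ zs'"
    using step(4,6) by (cases zs rule: rev_exhaust) auto
  have p: "prec (fst (last ys)) (fst y)" using step(3) by (simp add: good_def)
  show ?case
  proof (cases "zs' = []")
    case True
    then show ?thesis using zs p by simp
  next
    case False
    then have "prec (fst (last xs)) (fst (last ys))" using step(2) zs(2) step(5) by blast
    then show ?thesis using p prec_trans by simp
  qed
qed

lemma W_inv: "ws \<in> Wn \<Longrightarrow> 2 \<le> length ws \<Longrightarrow> butlast ws \<in> Wn \<and> good (fst (last (butlast ws))) (last ws)"
  by (induct rule: Wn.induct) auto

definition boxes :: "fm set \<Rightarrow> fm set" where "boxes Q = Q \<inter> range Box"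

lemma W_len: "xs \<in> Wn \<Longrightarrow> length xs \<le> card (boxes (fst (last xs))) + 1"
proof (induct rule: Wn.induct)
  case (base G D) then show ?case by simp
next
  case (step xs y)
  have P: "atom (fst (last xs))" using W_ne[OF step(1)] by blast
  have T: "atom (fst y)" "prec (fst (last xs)) (fst y)" using step(3) by (auto simp: good_def)
  have "boxes (fst (last xs)) \<subset> boxes (fst y)"
    using T(2) unfolding prec_def boxes_def by blast
  moreover have "finite (boxes (fst y))"
    using T(1) finite_Phi unfolding atom_def boxes_def by (meson finite_Int finite_subset)
  ultimately have "card (boxes (fst (last xs))) < card (boxes (fst y))" by (rule psubset_card_mono[rotated])
  then show ?case using step(2) by simp
qed

lemma W_set: "xs \<in> Wn \<Longrightarrow> set xs \<subseteq> Pow Phi \<times> Phi"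
  by (induct rule: Wn.induct) (auto simp: good_def atom_def)

lemma W_len2: "xs \<in> Wn \<Longrightarrow> length xs \<le> card Phi + 1"
proof -
  assume x: "xs \<in> Wn"
  have "boxes (fst (last xs)) \<subseteq> Phi" using W_ne[OF x] by (auto simp: atom_def boxes_def)
  then have "card (boxes (fst (last xs))) \<le> card Phi" by (simp add: card_mono)
  then show ?thesis using W_len[OF x] by simp
qed

lemma finite_Wn: "finite Wn"
proof (rule finite_subset)
  show "Wn \<subseteq> {xs. set xs \<subseteq> Pow Phi \<times> Phi \<and> length xs \<le> card Phi + 1}"
    using W_set W_len2 by blast
  show "finite {xs. set xs \<subseteq> Pow Phi \<times> Phi \<and> length xs \<le> card Phi + 1}"
    by (rule finite_lists_length_le) simp
qed

end


context cx begin

lemma Rm_prec: "Rm xs ys \<Longrightarrow> prec (fst (last xs)) (fst (last ys))"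
proof -
  assume "Rm xs ys"
  then obtain zs where h: "xs \<in> Wn" "ys \<in> Wn" "zs \<noteq> []" "ys = xs @ zs" unfolding Rm_def by blast
  have "xs \<noteq> []" using W_ne[OF h(1)] by blast
  then show ?thesis using W_prec[OF h(2) h(4) _ h(3)] by blast
qed

lemma truth: "\<phi> \<in> sub A \<Longrightarrow> xs \<in> Wn \<Longrightarrow> forces Rm Sm Vm xs \<phi> \<longleftrightarrow> \<phi> \<in> fst (last xs)"
proof (induct \<phi> arbitrary: xs)
  case (Var n) then show ?case by (simp add: Vm_def)
next
  case Top
  have "prv Top" by (rule taut_pv) (simp add: taut_def)
  then show ?case using atom_prov[OF conjunct2[OF W_ne[OF Top(2)]] subA_Phi[OF Top(1)]] by simp
next
  case Bot
  then show ?case using atom_Bot W_ne by simp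
next
  case (Imp a b)
  have s: "a \<in> sub A" "b \<in> sub A" using sub_trans[OF Imp(3)] by auto
  have Q: "atom (fst (last xs))" using W_ne[OF Imp(4)] by blast
  show ?case using Imp(1)[OF s(1) Imp(4)] Imp(2)[OF s(2) Imp(4)] atom_imp[OF Q subA_Phi[OF Imp(3)]] by simp
next
  case (Or a b)
  have s: "a \<in> sub A" "b \<in> sub A" using sub_trans[OF Or(3)] by auto
  have Q: "atom (fst (last xs))" using W_ne[OF Or(4)] by blast
  show ?case using Or(1)[OF s(1) Or(4)] Or(2)[OF s(2) Or(4)] atom_or[OF Q subA_Phi[OF Or(3)]] by simp
next
  case (And a b)
  have s: "a \<in> sub A" "b \<in> sub A" using sub_trans[OF And(3)] by auto
  have Q: "atom (fst (last xs))" using W_ne[OF And(4)] by blast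
  show ?case using And(1)[OF s(1) And(4)] And(2)[OF s(2) And(4)] atom_and[OF Q subA_Phi[OF And(3)]] by simp
next
  case (Box B)
  have s: "B \<in> sub A" using sub_trans[OF Box(2)] by auto
  have Q: "atom (fst (last xs))" using W_ne[OF Box(3)] by blast
  have IH: "\<And>ys. ys \<in> Wn \<Longrightarrow> forces Rm Sm Vm ys B \<longleftrightarrow> B \<in> fst (last ys)" using Box(1)[OF s] by blast
  show ?case
  proof
    assume f: "forces Rm Sm Vm xs (Box B)"
    show "Box B \<in> fst (last xs)"
    proof (rule ccontr)
      assume nb: "Box B \<notin> fst (last xs)"
      obtain T where T: "atom T" "prec (fst (last xs)) T" "B \<notin> T"
        using succ[OF Q subA_Phi[OF Box(2)] nb] by blast
      have g: "good (fst (last xs)) (T, Bot)" using good_bot[OF Q T(1,2)] .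
      have w: "xs @ [(T, Bot)] \<in> Wn" using Wn.step[OF Box(3) g] .
      have "Rm xs (xs @ [(T, Bot)])" unfolding Rm_def using Box(3) w by blast
      then have "forces Rm Sm Vm (xs @ [(T, Bot)]) B" using f by simp
      then have "B \<in> T" using IH[OF w] by simp
      then show False using T(3) by blast
    qed
  next
    assume b: "Box B \<in> fst (last xs)"
    show "forces Rm Sm Vm xs (Box B)"
    proof (simp, intro allI impI)
      fix ys assume r: "Rm xs ys"
      then have "ys \<in> Wn" by (simp add: Rm_def)
      moreover have "B \<in> fst (last ys)" using Rm_prec[OF r] b unfolding prec_def by blast
      ultimately show "forces Rm Sm Vm ys B" using IH by blast
    qed
  qed
next
  case (Rhd C D)
  have s: "C \<in> sub A" "D \<in> sub A" using sub_trans[OF Rhd(3)] by auto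
  have Q: "atom (fst (last xs))" using W_ne[OF Rhd(4)] by blast
  have IHC: "\<And>ys. ys \<in> Wn \<Longrightarrow> forces Rm Sm Vm ys C \<longleftrightarrow> C \<in> fst (last ys)" using Rhd(1)[OF s(1)] by blast
  have IHD: "\<And>ys. ys \<in> Wn \<Longrightarrow> forces Rm Sm Vm ys D \<longleftrightarrow> D \<in> fst (last ys)" using Rhd(2)[OF s(2)] by blast
  show ?case
  proof
    assume f: "forces Rm Sm Vm xs (Rhd C D)"
    show "Rhd C D \<in> fst (last xs)"
    proof (rule ccontr)
      assume nr: "Rhd C D \<notin> fst (last xs)"
      obtain G where G: "atom G" "prec (fst (last xs)) G" "C \<in> G" "j1 \<longrightarrow> D \<notin> G" "j5 \<longrightarrow> Box (Neg D) \<in> G"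
        "\<forall>C' D'. Rhd C' D' \<in> sub A \<longrightarrow> Rhd C' D' \<in> fst (last xs) \<longrightarrow> C' \<in> G \<longrightarrow>
           (\<exists>T. atom T \<and> prec (fst (last xs)) T \<and> D' \<in> T \<and> D \<notin> T)"
        using witness[OF Q Rhd(3) nr] by blast
      have g: "good (fst (last xs)) (G, D)" unfolding good_def fst_conv snd_conv
        using G subA_Phi[OF s(2)] by blast
      let ?ys = "xs @ [(G, D)]"
      have w: "?ys \<in> Wn" using Wn.step[OF Rhd(4) g] .
      have r: "Rm xs ?ys" unfolding Rm_def using Rhd(4) w by blast
      have "forces Rm Sm Vm ?ys C" using IHC[OF w] G(3) by simp
      then obtain zs where z: "Rm xs zs" "Sm ?ys zs" "forces Rm Sm Vm zs D" using f r by auto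
      have zw: "zs \<in> Wn" using z(1) by (simp add: Rm_def)
      have "D \<in> fst (last zs)" using IHD[OF zw] z(3) by blast
      moreover have "2 \<le> length ?ys" using W_ne[OF Rhd(4)] by (cases xs) auto
      moreover have "\<exists>us. us \<noteq> [] \<and> zs = butlast ?ys @ us" using z(1) by (simp add: Rm_def)
      ultimately show False using z(2) unfolding Sm_def by simp
    qed
  next
    assume rin: "Rhd C D \<in> fst (last xs)"
    show "forces Rm Sm Vm xs (Rhd C D)"
    proof (simp only: forces.simps, intro allI impI, elim conjE)
      fix ys assume r: "Rm xs ys" and fc: "forces Rm Sm Vm ys C"
      obtain us where u: "ys \<in> Wn" "us \<noteq> []" "ys = xs @ us" using r unfolding Rm_def by blast
      have cG: "C \<in> fst (last ys)" using IHC[OF u(1)] fc by blast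
      have xne: "xs \<noteq> []" using W_ne[OF Rhd(4)] by blast
      have l2: "2 \<le> length ys" using u xne by (cases xs; cases us) auto
      have inv: "butlast ys \<in> Wn" "good (fst (last (butlast ys))) (last ys)" using W_inv[OF u(1) l2] by auto
      have Gat: "atom (fst (last ys))" using W_ne[OF u(1)] by blast
      have pG: "prec (fst (last xs)) (fst (last ys))" using Rm_prec[OF r] .
      show "\<exists>zs. Rm xs zs \<and> Sm ys zs \<and> forces Rm Sm Vm zs D"
      proof (cases "length us = 1")
        case True
        then have bl: "butlast ys = xs" using u by (cases us) auto
        have "\<exists>T. atom T \<and> prec (fst (last xs)) T \<and> D \<in> T \<and> snd (last ys) \<notin> T"
          using inv(2) Rhd(3) rin cG unfolding good_def bl by blast
        then obtain T where T: "atom T" "prec (fst (last xs)) T" "D \<in> T" "snd (last ys) \<notin> T" by blast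
        let ?zs = "xs @ [(T, Bot)]"
        have zw: "?zs \<in> Wn" using Wn.step[OF Rhd(4) good_bot[OF Q T(1,2)]] .
        have "Rm xs ?zs" unfolding Rm_def using Rhd(4) zw by blast
        moreover have "Sm ys ?zs" unfolding Sm_def using u(1) zw T(4) by simp
        moreover have "forces Rm Sm Vm ?zs D" using IHD[OF zw] T(3) by simp
        ultimately show ?thesis by blast
      next
        case False
        have "length us \<noteq> 0" using u(2) by simp
        then have lu: "2 \<le> length us" using False by linarith
        obtain T where T: "atom T" "prec (fst (last xs)) T" "D \<in> T"
          using exist_rhd[OF Q Gat pG Rhd(3) rin cG] by blast
        let ?zs = "xs @ [(T, Bot)]"
        have zw: "?zs \<in> Wn" using Wn.step[OF Rhd(4) good_bot[OF Q T(1,2)]] .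
        have "Rm xs ?zs" unfolding Rm_def using Rhd(4) zw by blast
        moreover have "\<not> (\<exists>vs. vs \<noteq> [] \<and> ?zs = butlast ys @ vs)"
        proof
          assume "\<exists>vs. vs \<noteq> [] \<and> ?zs = butlast ys @ vs"
          then obtain vs where "vs \<noteq> []" "?zs = butlast ys @ vs" by blast
          then have "length ?zs \<ge> length (butlast ys) + 1" by (cases vs) auto
          moreover have "length (butlast ys) = length xs + length us - 1" using u(3) by simp
          ultimately show False using lu by simp
        qed
        then have "Sm ys ?zs" unfolding Sm_def using u(1) zw by blast
        moreover have "forces Rm Sm Vm ?zs D" using IHD[OF zw] T(3) by simp
        ultimately show ?thesis by blast
      qed
    qed
  qed
qed

end


lemma peval_forces: "peval (\<lambda>B. forces R S V x B) A = forces R S V x A"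
  by (induction A) auto

lemma soundness:
  assumes "prov j1 j5 A" "L_frame j1 j5 W R S"
  shows "valid_in W R S A"
  using assms(1)
proof (induction rule: prov.induct)
  case (ax_taut A)
  show ?case unfolding valid_in_def
  proof (intro allI ballI)
    fix V x
    have "peval (forces R S V x) A" using ax_taut by (simp add: taut_def)
    then show "forces R S V x A" by (simp only: peval_forces)
  qed
next
  case (ax_K A B) then show ?case by (simp add: valid_in_def)
next
  case (ax_L A)
  have fr: "simp_frame W R S" using assms(2) by (simp add: L_frame_def)
  have tr: "transp R" and wf: "wfp (\<lambda>x y. R y x)" using fr by (auto simp: simp_frame_def)
  show ?case unfolding valid_in_def
  proof (intro allI ballI)
    fix V x assume "x \<in> W"
    show "forces R S V x (Imp (Box (Imp (Box A) A)) (Box A))"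
    proof (rule ccontr)
      assume H0: "\<not> forces R S V x (Imp (Box (Imp (Box A) A)) (Box A))"
      have H: "(\<forall>y. R x y \<longrightarrow> (\<forall>ya. R y ya \<longrightarrow> forces R S V ya A) \<longrightarrow> forces R S V y A) \<and>
             \<not> (\<forall>y. R x y \<longrightarrow> forces R S V y A)" using H0 by simp
      then obtain y where y: "R x y" "\<not> forces R S V y A" by blast
      let ?Q = "{y. R x y \<and> \<not> forces R S V y A}"
      obtain m where m: "m \<in> ?Q" "\<forall>y. R m y \<longrightarrow> y \<notin> ?Q"
      proof -
        have "\<exists>z\<in>?Q. \<forall>y. R z y \<longrightarrow> y \<notin> ?Q"
        proof -
          have "y \<in> ?Q" using y by simp
          from wf[unfolded wfp_eq_minimal, rule_format, OF this] show ?thesis .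
        qed
        then show ?thesis using that by blast
      qed
      have "\<forall>ya. R m ya \<longrightarrow> forces R S V ya A"
      proof (intro allI impI)
        fix ya assume "R m ya"
        moreover have "R x m" using m by simp
        ultimately have "R x ya" using tr by (blast dest: transpD)
        then show "forces R S V ya A" using m \<open>R m ya\<close> by blast
      qed
      then show False using H m by blast
    qed
  qed
next
  case (ax_J3 A C B) then show ?case by (simp add: valid_in_def) blast
next
  case (ax_J6 A) then show ?case by (simp add: valid_in_def Iff_def Neg_def)
next
  case (ax_J4p A B C) then show ?case unfolding valid_in_def
  proof (intro allI ballI)
    fix V x assume "x \<in> W"
    show "forces R S V x (Imp (Box (Imp A B)) (Imp (Rhd C A) (Rhd C B)))"
    proof (simp, intro impI allI)
      fix y assume h1: "\<forall>y. R x y \<longrightarrow> forces R S V y A \<longrightarrow> forces R S V y B"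
        and h2: "\<forall>y. R x y \<and> forces R S V y C \<longrightarrow> (\<exists>z. R x z \<and> S y z \<and> forces R S V z A)"
        and h3: "R x y \<and> forces R S V y C"
      from h2 h3 obtain z where "R x z" "S y z" "forces R S V z A" by blast
      then show "\<exists>z. R x z \<and> S y z \<and> forces R S V z B" using h1 by blast
    qed
  qed
next
  case (ax_J1 A B)
  have refl: "\<And>y. y \<in> W \<Longrightarrow> S y y" and inW: "\<And>x y. R x y \<Longrightarrow> y \<in> W"
    using assms(2) ax_J1 by (auto simp: L_frame_def simp_frame_def)
  show ?case unfolding valid_in_def
  proof (intro allI ballI)
    fix V x assume "x \<in> W"
    show "forces R S V x (Imp (Box (Imp A B)) (Rhd A B))"
    proof (simp, intro impI allI)
      fix y assume h1: "\<forall>y. R x y \<longrightarrow> forces R S V y A \<longrightarrow> forces R S V y B"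
        and h3: "R x y \<and> forces R S V y A"
      then show "\<exists>z. R x z \<and> S y z \<and> forces R S V z B" using refl inW by blast
    qed
  qed
next
  case (ax_J5 A)
  have tr: "transp R" using assms(2) by (simp add: L_frame_def simp_frame_def)
  have RS: "\<And>x y. R x y \<Longrightarrow> S x y"
    using assms(2) ax_J5 by (auto simp: L_frame_def simp_frame_def)
  show ?case unfolding valid_in_def
  proof (intro allI ballI)
    fix V x assume "x \<in> W"
    show "forces R S V x (Rhd (Dia A) A)"
    proof (simp add: Dia_def Neg_def, intro impI allI)
      fix y assume h3: "R x y \<and> (\<exists>z. R y z \<and> forces R S V z A)"
      then obtain z where "R x y" "R y z" "forces R S V z A" by blast
      moreover have "R x z" using tr \<open>R x y\<close> \<open>R y z\<close> by (rule transpD)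
      ultimately show "\<exists>z. R x z \<and> S y z \<and> forces R S V z A" using RS by blast
    qed
  qed
next
  case (mp A B) then show ?case by (simp add: valid_in_def)
next
  case (nec A)
  then show ?case using assms(2)
    by (auto simp: valid_in_def L_frame_def simp_frame_def)
next
  case (R1 A B C)
  have inW: "\<And>x y. R x y \<Longrightarrow> y \<in> W" using assms(2) by (simp add: L_frame_def simp_frame_def)
  show ?case unfolding valid_in_def
  proof (intro allI ballI)
    fix V x assume "x \<in> W"
    have AB: "\<And>z. z \<in> W \<Longrightarrow> forces R S V z A \<Longrightarrow> forces R S V z B"
      using R1.IH by (simp add: valid_in_def)
    show "forces R S V x (Imp (Rhd C A) (Rhd C B))"
    proof (simp, intro impI allI)
      fix y assume h2: "\<forall>y. R x y \<and> forces R S V y C \<longrightarrow> (\<exists>z. R x z \<and> S y z \<and> forces R S V z A)"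
        and h3: "R x y \<and> forces R S V y C"
      from h2 h3 obtain z where "R x z" "S y z" "forces R S V z A" by blast
      then show "\<exists>z. R x z \<and> S y z \<and> forces R S V z B" using AB inW by blast
    qed
  qed
next
  case (R2 A B C)
  have inW: "\<And>x y. R x y \<Longrightarrow> y \<in> W" using assms(2) by (simp add: L_frame_def simp_frame_def)
  show ?case unfolding valid_in_def
  proof (intro allI ballI)
    fix V x assume "x \<in> W"
    have AB: "\<And>z. z \<in> W \<Longrightarrow> forces R S V z A \<Longrightarrow> forces R S V z B"
      using R2.IH by (simp add: valid_in_def)
    show "forces R S V x (Imp (Rhd B C) (Rhd A C))"
    proof (simp, intro impI allI)
      fix y assume h2: "\<forall>y. R x y \<and> forces R S V y B \<longrightarrow> (\<exists>z. R x z \<and> S y z \<and> forces R S V z C)"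
        and h3: "R x y \<and> forces R S V y A"
      then show "\<exists>z. R x z \<and> S y z \<and> forces R S V z C" using AB inW by blast
    qed
  qed
qed


context cx begin

lemma Wn_frame: "Wn \<noteq> {} \<Longrightarrow> L_frame j1 j5 Wn Rm Sm"
proof -
  assume ne: "Wn \<noteq> {}"
  have tr: "transp Rm"
  proof (rule transpI)
    fix x y z assume "Rm x y" "Rm y z"
    then show "Rm x z" unfolding Rm_def by fastforce
  qed
  have wf: "wfp (\<lambda>x y. Rm y x)"
  proof (rule wfp_if_convertible_to_nat[where f = "\<lambda>xs. card Phi + 2 - length xs"])
    fix x y assume "Rm y x"
    then obtain zs where h: "x \<in> Wn" "zs \<noteq> []" "x = y @ zs" unfolding Rm_def by blast
    have "length x \<le> card Phi + 1" using W_len2[OF h(1)] .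
    moreover have "length y < length x" using h(2,3) by simp
    ultimately show "card Phi + 2 - length x < card Phi + 2 - length y" by linarith
  qed
  have sf: "simp_frame Wn Rm Sm" unfolding simp_frame_def using ne tr wf
    by (auto simp: Rm_def Sm_def)
  have j1c: "j1 \<longrightarrow> (\<forall>x\<in>Wn. Sm x x)"
  proof (intro impI ballI)
    fix x assume j1 "x \<in> Wn"
    show "Sm x x"
    proof (cases "2 \<le> length x")
      case True
      have "good (fst (last (butlast x))) (last x)" using W_inv[OF \<open>x \<in> Wn\<close> True] by blast
      then have "snd (last x) \<notin> fst (last x)" using \<open>j1\<close> unfolding good_def by blast
      then show ?thesis unfolding Sm_def using \<open>x \<in> Wn\<close> by blast
    next
      case False
      then show ?thesis unfolding Sm_def using \<open>x \<in> Wn\<close> by blast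
    qed
  qed
  have j5c: "j5 \<longrightarrow> (\<forall>x y. Rm x y \<longrightarrow> Sm x y)"
  proof (intro impI allI)
    fix x y assume j5 "Rm x y"
    then have xy: "x \<in> Wn" "y \<in> Wn" unfolding Rm_def by blast+
    show "Sm x y"
    proof (cases "2 \<le> length x")
      case True
      have g: "good (fst (last (butlast x))) (last x)" using W_inv[OF xy(1) True] by blast
      then have b: "Box (Neg (snd (last x))) \<in> fst (last x)" "snd (last x) \<in> Phi"
        using \<open>j5\<close> unfolding good_def by blast+
      have "Neg (snd (last x)) \<in> fst (last y)" using Rm_prec[OF \<open>Rm x y\<close>] b(1) unfolding prec_def by blast
      then have "snd (last x) \<notin> fst (last y)" using atom_negin W_ne[OF xy(2)] b(2) by blast
      then show ?thesis unfolding Sm_def using xy by blast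
    next
      case False
      then show ?thesis unfolding Sm_def using xy by blast
    qed
  qed
  show ?thesis unfolding L_frame_def using sf j1c j5c by blast
qed

lemma countermodel:
  assumes np: "\<not> prv A"
  shows "\<exists>xs. xs \<in> Wn \<and> \<not> forces Rm Sm Vm xs A"
proof -
  have "cons {Neg A}"
  proof (rule ccontr)
    assume "\<not> cons {Neg A}"
    then obtain L where L: "set L \<subseteq> {Neg A}" "prv (Imp (conjl L) Bot)" unfolding cons_def ent_def by blast
    have "taut (Imp (Imp (conjl L) Bot) A)"
      unfolding taut_def
    proof
      fix g
      have "\<not> peval g A \<Longrightarrow> \<forall>x\<in>set L. peval g x" using L(1) by auto
      then show "peval g (Imp (Imp (conjl L) Bot) A)" by auto
    qed
    then have "prv A" using L(2) by (rule taut_mp)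
    then show False using np by blast
  qed
  from lindenbaum[OF this] obtain G where G: "atom G" "cons ({Neg A} \<union> lits G)" by blast
  have nA: "A \<notin> G" using lind_out[OF G(2)] by blast
  have w: "[(G, Bot)] \<in> Wn" using Wn.base[OF G(1) Bot_Phi] .
  have "\<not> forces Rm Sm Vm [(G, Bot)] A" using truth[OF sub_refl w] nA by simp
  then show ?thesis using w by blast
qed

end

lemma transfer:
  fixes W :: "'a set" and h :: "'a \<Rightarrow> nat"
  assumes fin: "finite W" and fr: "L_frame j1 j5 W R S" and x0: "x0 \<in> W"
    and nf: "\<not> forces R S V x0 A" and hwf: "\<And>x y. R x y \<Longrightarrow> h y < h x"
  shows "\<exists>(W'::'w::infinite set) R' S'. L_frame j1 j5 W' R' S' \<and> finite W' \<and> \<not> valid_in W' R' S' A"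
proof -
  obtain B :: "'w set" where B: "finite B" "card B = card W"
    using infinite_arbitrarily_large[OF infinite_UNIV] by blast
  obtain f where f: "f ` W \<subseteq> B" "inj_on f W" using card_le_inj[OF fin B(1)] B(2) by auto
  define g where "g = inv_into W f"
  have gf: "\<And>x. x \<in> W \<Longrightarrow> g (f x) = x" unfolding g_def using f(2) by simp
  define R' where "R' a b \<longleftrightarrow> (\<exists>x\<in>W. \<exists>y\<in>W. a = f x \<and> b = f y \<and> R x y)" for a b
  define S' where "S' a b \<longleftrightarrow> (\<exists>x\<in>W. \<exists>y\<in>W. a = f x \<and> b = f y \<and> S x y)" for a b
  define V' where "V' a n = V (g a) n" for a n
  have sf: "simp_frame W R S" using fr by (simp add: L_frame_def)
  have RW: "\<And>x y. R x y \<Longrightarrow> x \<in> W \<and> y \<in> W" and SW: "\<And>x y. S x y \<Longrightarrow> x \<in> W \<and> y \<in> W"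
    using sf by (auto simp: simp_frame_def)
  have trR: "transp R" using sf by (simp add: simp_frame_def)
  have R'f: "\<And>x b. x \<in> W \<Longrightarrow> R' (f x) b \<longleftrightarrow> (\<exists>y. R x y \<and> b = f y)"
    unfolding R'_def using RW f(2) by (auto dest: inj_onD)
  have S'f: "\<And>x b. x \<in> W \<Longrightarrow> S' (f x) b \<longleftrightarrow> (\<exists>y. S x y \<and> b = f y)"
    unfolding S'_def using SW f(2) by (auto dest: inj_onD)
  have corr: "\<And>x. x \<in> W \<Longrightarrow> forces R' S' V' (f x) \<phi> \<longleftrightarrow> forces R S V x \<phi>" for \<phi>
  proof (induct \<phi>)
    case (Var n) then show ?case by (simp add: V'_def gf)
  next
    case (Box B)
    show ?case
    proof -
      have "forces R' S' V' (f x) (Box B) \<longleftrightarrow> (\<forall>y. R x y \<longrightarrow> forces R' S' V' (f y) B)"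
        using R'f[OF Box(2)] by auto
      also have "\<dots> \<longleftrightarrow> (\<forall>y. R x y \<longrightarrow> forces R S V y B)" using Box(1) RW by blast
      finally show ?thesis by simp
    qed
  next
    case (Rhd C D)
    have "forces R' S' V' (f x) (Rhd C D) \<longleftrightarrow>
       (\<forall>y. R x y \<and> forces R' S' V' (f y) C \<longrightarrow> (\<exists>z. R x z \<and> S y z \<and> forces R' S' V' (f z) D))"
    proof -
      have "forces R' S' V' (f x) (Rhd C D) \<longleftrightarrow>
        (\<forall>b. R' (f x) b \<and> forces R' S' V' b C \<longrightarrow> (\<exists>c. R' (f x) c \<and> S' b c \<and> forces R' S' V' c D))"
        by simp
      also have "\<dots> \<longleftrightarrow> (\<forall>y. R x y \<and> forces R' S' V' (f y) C \<longrightarrow> (\<exists>c. R' (f x) c \<and> S' (f y) c \<and> forces R' S' V' c D))"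
        using R'f[OF Rhd(3)] by auto
      also have "\<dots> \<longleftrightarrow> (\<forall>y. R x y \<and> forces R' S' V' (f y) C \<longrightarrow> (\<exists>z. R x z \<and> S' (f y) (f z) \<and> forces R' S' V' (f z) D))"
      proof -
        have eq: "\<And>P. (\<exists>c. R' (f x) c \<and> P c) \<longleftrightarrow> (\<exists>z. R x z \<and> P (f z))"
          using R'f[OF Rhd(3)] by auto
        show ?thesis by (simp only: eq)
      qed
      also have "\<dots> \<longleftrightarrow> (\<forall>y. R x y \<and> forces R' S' V' (f y) C \<longrightarrow> (\<exists>z. R x z \<and> S y z \<and> forces R' S' V' (f z) D))"
      proof -
        have e: "S' (f y) (f z) \<longleftrightarrow> S y z" if "R x y" "R x z" for y z
        proof -
          have yz: "y \<in> W" "z \<in> W" using RW that by auto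
          have "S' (f y) (f z) \<longleftrightarrow> (\<exists>w. S y w \<and> f z = f w)" using S'f[OF yz(1)] by simp
          also have "\<dots> \<longleftrightarrow> S y z"
          proof
            assume "\<exists>w. S y w \<and> f z = f w"
            then obtain w where "S y w" "f z = f w" by blast
            moreover have "w \<in> W" using SW \<open>S y w\<close> by blast
            ultimately show "S y z" using inj_onD[OF f(2)] yz(2) by metis
          qed blast
          finally show ?thesis .
        qed
        show ?thesis
          apply (rule iffI)
          subgoal using e by blast
          subgoal using e by blast
          done
      qed
      finally show ?thesis .
    qed
    also have "\<dots> \<longleftrightarrow> (\<forall>y. R x y \<and> forces R S V y C \<longrightarrow> (\<exists>z. R x z \<and> S y z \<and> forces R S V z D))"
    proof -
      have eC: "forces R' S' V' (f y) C \<longleftrightarrow> forces R S V y C" if "R x y" for y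
        using Rhd(1)[of y] RW[OF that] by blast
      have eD: "forces R' S' V' (f y) D \<longleftrightarrow> forces R S V y D" if "R x y" for y
        using Rhd(2)[of y] RW[OF that] by blast
      show ?thesis
        apply (rule iffI)
        subgoal using eC eD by blast
        subgoal using eC eD by blast
        done
    qed
    finally show ?case by simp
  qed auto
  let ?W' = "f ` W"
  have fr': "L_frame j1 j5 ?W' R' S'"
  proof -
    have "?W' \<noteq> {}" using x0 by blast
    moreover have "\<forall>a b. R' a b \<longrightarrow> a \<in> ?W' \<and> b \<in> ?W'" unfolding R'_def by blast
    moreover have "\<forall>a b. S' a b \<longrightarrow> a \<in> ?W' \<and> b \<in> ?W'" unfolding S'_def by blast
    moreover have "transp R'"
    proof (rule transpI)
      fix a b c assume "R' a b" "R' b c"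
      then obtain x y y' z where "x \<in> W" "y \<in> W" "y' \<in> W" "z \<in> W" "a = f x" "b = f y" "R x y"
        "b = f y'" "c = f z" "R y' z" unfolding R'_def by blast
      then have "y = y'" using f(2) by (metis inj_onD)
      then have "R x z" using trR \<open>R x y\<close> \<open>R y' z\<close> by (metis transpD)
      then show "R' a c" unfolding R'_def using \<open>x \<in> W\<close> \<open>z \<in> W\<close> \<open>a = f x\<close> \<open>c = f z\<close> by blast
    qed
    moreover have "wfp (\<lambda>a b. R' b a)"
    proof (rule wfp_if_convertible_to_nat[where f = "\<lambda>a. h (g a)"])
      fix a b assume "R' b a"
      then obtain x y where "x \<in> W" "y \<in> W" "b = f x" "a = f y" "R x y" unfolding R'_def by blast
      then show "h (g a) < h (g b)" using hwf gf by simp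
    qed
    moreover have "j1 \<longrightarrow> (\<forall>a\<in>?W'. S' a a)"
      using fr unfolding L_frame_def S'_def by blast
    moreover have "j5 \<longrightarrow> (\<forall>a b. R' a b \<longrightarrow> S' a b)"
      using fr unfolding L_frame_def R'_def S'_def by blast
    ultimately show ?thesis unfolding L_frame_def simp_frame_def by blast
  qed
  have "\<not> forces R' S' V' (f x0) A" using corr[OF x0] nf by simp
  then have "\<not> valid_in ?W' R' S' A" unfolding valid_in_def using x0 by blast
  moreover have "finite ?W'" using fin by simp
  ultimately show ?thesis using fr' by blast
qed

theorem theorem3p1:
  fixes j1 j5 :: bool and A :: fm
  shows "(prov j1 j5 A \<longleftrightarrow>
            (\<forall>(W::'w::infinite set) R S. L_frame j1 j5 W R S \<longrightarrow> valid_in W R S A))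
       \<and> (prov j1 j5 A \<longleftrightarrow>
            (\<forall>(W::'w::infinite set) R S. L_frame j1 j5 W R S \<and> finite W \<longrightarrow> valid_in W R S A))"
proof -
  have s1: "prov j1 j5 A \<Longrightarrow> (\<forall>(W::'w::infinite set) R S. L_frame j1 j5 W R S \<longrightarrow> valid_in W R S A)"
    using soundness by blast
  have c: "prov j1 j5 A" if h: "\<forall>(W::'w::infinite set) R S. L_frame j1 j5 W R S \<and> finite W \<longrightarrow> valid_in W R S A"
  proof (rule ccontr)
    assume np: "\<not> prov j1 j5 A"
    obtain xs where xs: "xs \<in> cx.Wn j1 j5 A" "\<not> forces (cx.Rm j1 j5 A) (cx.Sm j1 j5 A) cx.Vm xs A"
      using cx.countermodel[OF np] by blast
    have fr: "L_frame j1 j5 (cx.Wn j1 j5 A) (cx.Rm j1 j5 A) (cx.Sm j1 j5 A)"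
      using cx.Wn_frame xs(1) by blast
    have hw: "\<And>x y. cx.Rm j1 j5 A x y \<Longrightarrow> (card (cx.Phi j1 j5 A) + 2 - length y) < (card (cx.Phi j1 j5 A) + 2 - length x)"
    proof -
      fix x y assume "cx.Rm j1 j5 A x y"
      then obtain zs where hh: "y \<in> cx.Wn j1 j5 A" "zs \<noteq> []" "y = x @ zs" unfolding cx.Rm_def by blast
      have "length y \<le> card (cx.Phi j1 j5 A) + 1" using cx.W_len2[OF hh(1)] .
      moreover have "length x < length y" using hh(2,3) by simp
      ultimately show "(card (cx.Phi j1 j5 A) + 2 - length y) < (card (cx.Phi j1 j5 A) + 2 - length x)" by linarith
    qed
    obtain W' :: "'w set" and R' S' where "L_frame j1 j5 W' R' S'" "finite W'" "\<not> valid_in W' R' S' A"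
      using transfer[where h = "\<lambda>xs. card (cx.Phi j1 j5 A) + 2 - length xs", OF cx.finite_Wn fr xs(1) xs(2) hw] by blast
    then show False using h by blast
  qed
  show ?thesis using s1 c by blast
qed


end
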